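(* Let $0\le k\le n$. There are exactly $k(n-k)+1$ isomorphism classes of matroids of rank $k$ on $n$ elements of the form $\mathsf{U}_{0,m}\oplus\mathsf{T}_{k-\ell,n-\ell-m}\oplus\mathsf{U}_{\ell,\ell}$, and the Tutte polynomials of representatives of these classes are linearly independent in $\mathbb{Z}[x,y]$.
   Context: $\mathsf{U}_{r,m}$ is the uniform matroid of rank $r$ on $m$ elements. For $0\le k\le n$, $\mathsf{T}_{k,n}$ is the minimal matroid: the matroid on $[n]$ whose bases are the $k$-subsets $B$ with $|B\cap\{1,\dots,k\}|\ge k-1$ (equivalently, the cycle matroid of a cycle of length $k+1$ with one edge replaced by $n-k$ parallel edges). *)

theory Defs
  imports "HOL-Computational_Algebra.Polynomial"
begin

type_synonym 'a matroid = "'a set \<times> 'a set set"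

definition ground :: "'a matroid \<Rightarrow> 'a set" where "ground M = fst M"
definition bases :: "'a matroid \<Rightarrow> 'a set set" where "bases M = snd M"

definition is_matroid :: "'a matroid \<Rightarrow> bool" where
  "is_matroid M \<longleftrightarrow> finite (ground M) \<and> bases M \<noteq> {} \<and> (\<forall>B\<in>bases M. B \<subseteq> ground M) \<and>
     (\<forall>B1\<in>bases M. \<forall>B2\<in>bases M. \<forall>x\<in>B1 - B2. \<exists>y\<in>B2 - B1. insert y (B1 - {x}) \<in> bases M)"

definition unif :: "nat \<Rightarrow> nat \<Rightarrow> nat matroid" where
  "unif r m = ({0..<m}, {B. B \<subseteq> {0..<m} \<and> card B = r})"

text \<open>Minimal matroid T_{k,n} on {0..<n} (the paper's [n] shifted by one):
  bases are the k-subsets B with |B \<inter> {0..<k}| \<ge> k-1.\<close>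
definition minmat :: "nat \<Rightarrow> nat \<Rightarrow> nat matroid" where
  "minmat k n = ({0..<n}, {B. B \<subseteq> {0..<n} \<and> card B = k \<and> card (B \<inter> {0..<k}) + 1 \<ge> k})"

definition shift :: "nat \<Rightarrow> nat matroid \<Rightarrow> nat matroid" where
  "shift d M = ((+) d ` ground M, (\<lambda>B. (+) d ` B) ` bases M)"

text \<open>Direct sum (intended for disjoint ground sets).\<close>
definition dsum :: "'a matroid \<Rightarrow> 'a matroid \<Rightarrow> 'a matroid" where
  "dsum M N = (ground M \<union> ground N, {B \<union> C | B C. B \<in> bases M \<and> C \<in> bases N})"

definition iso :: "'a matroid \<Rightarrow> 'b matroid \<Rightarrow> bool" where
  "iso M N \<longleftrightarrow> (\<exists>f. bij_betw f (ground M) (ground N) \<and> bases N = (\<lambda>B. f ` B) ` bases M)"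

definition mrank :: "'a matroid \<Rightarrow> 'a set \<Rightarrow> nat" where
  "mrank M A = Max ((\<lambda>B. card (A \<inter> B)) ` bases M)"

text \<open>Z[x,y] is represented as int poly poly: outer variable y, inner variable x.\<close>
definition varX :: "int poly poly" where "varX = [:[:0, 1:]:]"
definition varY :: "int poly poly" where "varY = [:0, 1:]"

definition tutte :: "'a matroid \<Rightarrow> int poly poly" where
  "tutte M = (\<Sum>A\<in>Pow (ground M).
      (varX - 1) ^ (mrank M (ground M) - mrank M A) * (varY - 1) ^ (card A - mrank M A))"

text \<open>U_{0,m} \<oplus> T_{k-l,n-l-m} \<oplus> U_{l,l}, realised on {0..<n}.\<close>
definition special :: "nat \<Rightarrow> nat \<Rightarrow> nat \<Rightarrow> nat \<Rightarrow> nat matroid" where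
  "special k n l m = dsum (unif 0 m)
      (dsum (shift m (minmat (k - l) (n - l - m))) (shift (n - l) (unif l l)))"

definition special_family :: "nat \<Rightarrow> nat \<Rightarrow> nat matroid set" where
  "special_family k n = {special k n l m | l m. l \<le> k \<and> m \<le> n - k}"

end

theory Submission
  imports Defs
begin

lemma shift_image_eq:
  fixes m n' k' :: nat
  shows "(\<lambda>B. (+) m ` B) ` {B. B \<subseteq> {0..<n'} \<and> card B = k' \<and> card (B \<inter> {0..<k'}) + 1 \<ge> k'}
       = {B. B \<subseteq> {m..<m+n'} \<and> card B = k' \<and> k' \<le> card (B \<inter> {m..<m+k'}) + 1}"
proof (rule set_eqI, rule iffI)
  fix B assume "B \<in> (\<lambda>B. (+) m ` B) ` {B. B \<subseteq> {0..<n'} \<and> card B = k' \<and> card (B \<inter> {0..<k'}) + 1 \<ge> k'}"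
  then obtain Bt where B: "B = (+) m ` Bt" and Bt: "Bt \<subseteq> {0..<n'}" "card Bt = k'" "card (Bt \<inter> {0..<k'}) + 1 \<ge> k'" by blast
  have inj: "inj ((+) m)" by (simp add: inj_def)
  have "B \<inter> {m..<m+k'} = (+) m ` (Bt \<inter> {0..<k'})"
    unfolding B by (auto simp: image_iff)
  then have "card (B \<inter> {m..<m+k'}) = card (Bt \<inter> {0..<k'})"
    by (simp add: card_image inj_on_def)
  moreover have "card B = k'" unfolding B using Bt by (simp add: card_image inj_on_def)
  moreover have "B \<subseteq> {m..<m+n'}" unfolding B using Bt by auto
  ultimately show "B \<in> {B. B \<subseteq> {m..<m+n'} \<and> card B = k' \<and> k' \<le> card (B \<inter> {m..<m+k'}) + 1}" using Bt by auto
next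
  fix B assume B: "B \<in> {B. B \<subseteq> {m..<m+n'} \<and> card B = k' \<and> k' \<le> card (B \<inter> {m..<m+k'}) + 1}"
  define Bt where "Bt = (\<lambda>x. x - m) ` B"
  have BB: "B = (+) m ` Bt" unfolding Bt_def using B by (force simp: image_iff)
  have "B \<inter> {m..<m+k'} = (+) m ` (Bt \<inter> {0..<k'})"
    unfolding BB by (auto simp: image_iff)
  then have "card (B \<inter> {m..<m+k'}) = card (Bt \<inter> {0..<k'})"
    by (simp add: card_image inj_on_def)
  moreover have "card B = card Bt" unfolding BB by (simp add: card_image inj_on_def)
  moreover have "Bt \<subseteq> {0..<n'}"
  proof
    fix y assume "y \<in> Bt"
    then obtain x where "x \<in> B" "y = x - m" unfolding Bt_def by auto
    moreover have "x \<in> {m..<m+n'}" using B \<open>x \<in> B\<close> by auto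
    ultimately show "y \<in> {0..<n'}" by auto
  qed
  ultimately show "B \<in> (\<lambda>B. (+) m ` B) ` {B. B \<subseteq> {0..<n'} \<and> card B = k' \<and> card (B \<inter> {0..<k'}) + 1 \<ge> k'}"
    using B BB by auto
qed

lemma special_ground:
  assumes "k \<le> n" "l \<le> k" "m \<le> n - k"
  shows "ground (special k n l m) = {0..<n}"
proof -
  have "(+) (n-l) ` {0..<l} = {n-l..<n}" using assms image_add_atLeastLessThan[of "n-l" 0 l] by (simp add: add.commute)
  moreover have "(+) m ` {0..<n-l-m} = {m..<n-l}" using assms by (simp add: image_add_atLeastLessThan)
  ultimately show ?thesis
    using assms unfolding special_def dsum_def ground_def shift_def unif_def minmat_def fst_conv
    by auto
qed

lemma special_bases:
  assumes "k \<le> n" "l \<le> k" "m \<le> n - k"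
  shows "bases (special k n l m) = (\<lambda>B. B \<union> {n-l..<n}) ` {B. B \<subseteq> {m..<n-l} \<and> card B = k-l \<and> k-l \<le> card (B \<inter> {m..<m+(k-l)}) + 1}"
proof -
  have u0: "bases (unif 0 m) = {{}}"
  proof -
    have h: "\<And>B. B \<subseteq> {0..<m} \<Longrightarrow> card B = 0 \<Longrightarrow> B = {}"
      by (metis card_0_eq finite_atLeastLessThan finite_subset)
    show ?thesis unfolding bases_def unif_def snd_conv
    proof (rule set_eqI, rule iffI)
      fix B assume "B \<in> {B. B \<subseteq> {0..<m} \<and> card B = 0}" then show "B \<in> {{}}" using h by blast
    qed simp
  qed
  have ul0: "{B. B \<subseteq> {0..<l} \<and> card B = l} = {{0..<l}}"
  proof (rule set_eqI, rule iffI)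
    fix B assume "B \<in> {B. B \<subseteq> {0..<l} \<and> card B = l}"
    then show "B \<in> {{0..<l}}" using card_subset_eq[OF finite_atLeastLessThan, of B 0 l] by simp
  qed simp
  have img: "(+) (n-l) ` {0..<l} = {n-l..<n}" using assms image_add_atLeastLessThan[of "n-l" 0 l] by (simp add: add.commute)
  have ul: "bases (shift (n-l) (unif l l)) = {{n-l..<n}}"
    unfolding shift_def bases_def unif_def snd_conv ul0 image_insert image_empty img ..
  have mm: "bases (shift m (minmat (k-l) (n-l-m))) = {B. B \<subseteq> {m..<n-l} \<and> card B = k-l \<and> k-l \<le> card (B \<inter> {m..<m+(k-l)}) + 1}"
    using shift_image_eq[of m "n-l-m" "k-l"] assms unfolding shift_def bases_def minmat_def snd_conv
    by simp
  show ?thesis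
    unfolding special_def dsum_def bases_def[of "(_, _)"] snd_conv
    unfolding bases_def[symmetric] u0 ul mm by auto
qed


lemma Max_eqI_nat:
  fixes g :: "'b \<Rightarrow> nat"
  assumes "finite S" "\<And>B. B \<in> S \<Longrightarrow> g B \<le> r" "\<exists>B0\<in>S. g B0 = r"
  shows "Max (g ` S) = r"
  using assms by (intro Max_eqI) auto

lemma rank_abstract:
  fixes P Q C A :: "'a set"
  assumes fin: "finite P" "finite Q" "finite C"
    and disj: "P \<inter> Q = {}" "P \<inter> C = {}" "Q \<inter> C = {}"
    and kP: "card P = k"
  defines "Bs \<equiv> (\<lambda>B. B \<union> C) ` {B. B \<subseteq> P \<union> Q \<and> card B = k \<and> k \<le> card (B \<inter> P) + 1}"
  shows "Max ((\<lambda>B. card (A \<inter> B)) ` Bs) = card (A \<inter> C) + min (card (A \<inter> P) + (if A \<inter> Q = {} then 0 else 1)) k"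
proof (rule Max_eqI_nat)
  show "finite Bs" unfolding Bs_def using fin by (auto intro: finite_subset[of _ "Pow (P \<union> Q)"])
  let ?r = "card (A \<inter> C) + min (card (A \<inter> P) + (if A \<inter> Q = {} then 0 else 1)) k"
  show "card (A \<inter> B) \<le> ?r" if "B \<in> Bs" for B
  proof -
    obtain B' where B: "B = B' \<union> C" "B' \<subseteq> P \<union> Q" "card B' = k" "k \<le> card (B' \<inter> P) + 1"
      using \<open>B \<in> Bs\<close> unfolding Bs_def by blast
    have finB': "finite B'" using B(2) fin by (meson finite_Un finite_subset)
    have "A \<inter> B = (A \<inter> B') \<union> (A \<inter> C)" using B by auto
    moreover have "(A \<inter> B') \<inter> (A \<inter> C) = {}" using B(2) disj by auto
    ultimately have c1: "card (A \<inter> B) = card (A \<inter> B') + card (A \<inter> C)"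
      using finB' fin by (simp add: card_Un_disjoint)
    have sB: "B' = (B' \<inter> P) \<union> (B' \<inter> Q)" using B(2) by auto
    have cB: "card B' = card (B' \<inter> P) + card (B' \<inter> Q)"
      using card_Un_disjoint[of "B' \<inter> P" "B' \<inter> Q"] finB' disj sB by auto
    have sAB: "A \<inter> B' = (A \<inter> B' \<inter> P) \<union> (A \<inter> B' \<inter> Q)" using B(2) by auto
    have cAB: "card (A \<inter> B') = card (A \<inter> B' \<inter> P) + card (A \<inter> B' \<inter> Q)"
      using card_Un_disjoint[of "A \<inter> B' \<inter> P" "A \<inter> B' \<inter> Q"] finB' disj sAB by auto
    have q1: "card (B' \<inter> Q) \<le> 1" using cB B(3,4) by linarith
    have "card (A \<inter> B' \<inter> Q) \<le> card (B' \<inter> Q)" using finB' by (intro card_mono) auto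
    moreover have "A \<inter> Q = {} \<Longrightarrow> A \<inter> B' \<inter> Q = {}" by blast
    then have "A \<inter> Q = {} \<Longrightarrow> card (A \<inter> B' \<inter> Q) = 0" by simp
    ultimately have q2: "card (A \<inter> B' \<inter> Q) \<le> (if A \<inter> Q = {} then 0 else 1)" using q1 by auto
    have p1: "card (A \<inter> B' \<inter> P) \<le> card (A \<inter> P)" using fin by (intro card_mono) auto
    have k1: "card (A \<inter> B') \<le> k" using B(3) finB' by (metis card_mono inf_le2)
    show ?thesis using c1 cAB q2 p1 k1 by linarith
  qed
  show "\<exists>B0\<in>Bs. card (A \<inter> B0) = ?r"
  proof (cases "A \<inter> Q \<noteq> {} \<and> card (A \<inter> P) < k")
    case True
    then obtain q where q: "q \<in> A" "q \<in> Q" by auto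
    have "\<not> P \<subseteq> A"
    proof
      assume "P \<subseteq> A" then have "A \<inter> P = P" by auto
      then show False using True kP by simp
    qed
    then obtain p where p: "p \<in> P" "p \<notin> A" by auto
    define B' where "B' = insert q (P - {p})"
    have qP: "q \<notin> P" using q disj by auto
    have cP: "card (P - {p}) = k - 1" using p kP fin by simp
    have k1: "k \<ge> 1" using p kP fin by (metis One_nat_def Suc_leI card_gt_0_iff empty_iff)
    have "card B' = k" unfolding B'_def using cP qP fin k1 by (simp add: card_insert_if)
    moreover have "B' \<inter> P = P - {p}" unfolding B'_def using qP by auto
    moreover have "B' \<subseteq> P \<union> Q" unfolding B'_def using p q by auto
    ultimately have "B' \<union> C \<in> Bs" unfolding Bs_def using cP by auto
    moreover have "A \<inter> (B' \<union> C) = insert q (A \<inter> P) \<union> (A \<inter> C)" unfolding B'_def using p q by auto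
    moreover have "card (insert q (A \<inter> P) \<union> (A \<inter> C)) = card (A \<inter> P) + 1 + card (A \<inter> C)"
    proof -
      have "card (insert q (A \<inter> P)) = card (A \<inter> P) + 1" using qP fin by simp
      moreover have "insert q (A \<inter> P) \<inter> (A \<inter> C) = {}" using q disj by auto
      moreover have "finite (insert q (A \<inter> P))" "finite (A \<inter> C)" using fin by auto
      ultimately show ?thesis using card_Un_disjoint[of "insert q (A \<inter> P)" "A \<inter> C"] by simp
    qed
    ultimately show ?thesis using True by (intro bexI[of _ "B' \<union> C"]) auto
  next
    case False
    have "card (P \<inter> P) = k" using kP by simp
    then have "P \<union> C \<in> Bs" unfolding Bs_def by auto
    moreover have "A \<inter> (P \<union> C) = (A \<inter> P) \<union> (A \<inter> C)" by auto
    moreover have "card ((A \<inter> P) \<union> (A \<inter> C)) = card (A \<inter> P) + card (A \<inter> C)"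
      using fin disj by (intro card_Un_disjoint) auto
    moreover have "card (A \<inter> P) \<le> k" using kP fin by (metis card_mono inf_le2)
    moreover have "card (A \<inter> P) = min (card (A \<inter> P) + (if A \<inter> Q = {} then 0 else 1)) k"
      using False \<open>card (A \<inter> P) \<le> k\<close> by auto
    ultimately show ?thesis by (intro bexI[of _ "P \<union> C"]) auto
  qed
qed
lemma sum_Pow_split:
  assumes "finite U" "finite V" "U \<inter> V = {}"
  shows "(\<Sum>A\<in>Pow (U \<union> V). f (A \<inter> U) (A \<inter> V)) = (\<Sum>A1\<in>Pow U. \<Sum>A2\<in>Pow V. f A1 A2)"
proof -
  have bij: "bij_betw (\<lambda>A. (A \<inter> U, A \<inter> V)) (Pow (U \<union> V)) (Pow U \<times> Pow V)"
    by (rule bij_betw_byWitness[where f'="\<lambda>(A1,A2). A1 \<union> A2"]) (use assms(3) in auto)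
  have "(\<Sum>A\<in>Pow (U \<union> V). f (A \<inter> U) (A \<inter> V)) = (\<Sum>p\<in>Pow U \<times> Pow V. case_prod f p)"
    using sum.reindex_bij_betw[OF bij, of "case_prod f"] by simp
  also have "\<dots> = (\<Sum>A1\<in>Pow U. \<Sum>A2\<in>Pow V. f A1 A2)"
    by (simp add: sum.cartesian_product)
  finally show ?thesis .
qed

lemma sum_Pow_binom:
  fixes u v :: "'a::comm_ring_1"
  assumes "finite U"
  shows "(\<Sum>A\<in>Pow U. u ^ card A * v ^ (card U - card A)) = (u + v) ^ card U"
  using assms
proof (induction U rule: finite_induct)
  case empty then show ?case by simp
next
  case (insert a U)
  have fin: "finite (Pow U)" using insert by simp
  have inj: "inj_on (insert a) (Pow U)" using insert(2) by (auto simp: inj_on_def)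
  have disj: "Pow U \<inter> insert a ` Pow U = {}" using insert(2) by auto
  have "(\<Sum>A\<in>Pow (insert a U). u ^ card A * v ^ (card (insert a U) - card A))
     = (\<Sum>A\<in>Pow U. u ^ card A * v ^ (Suc (card U) - card A)) + (\<Sum>A\<in>insert a ` Pow U. u ^ card A * v ^ (Suc (card U) - card A))"
    unfolding Pow_insert using insert fin disj by (simp add: sum.union_disjoint)
  also have "(\<Sum>A\<in>insert a ` Pow U. u ^ card A * v ^ (Suc (card U) - card A)) = (\<Sum>A\<in>Pow U. u ^ Suc (card A) * v ^ (card U - card A))"
  proof -
    have "\<And>x. x \<in> Pow U \<Longrightarrow> card (insert a x) = Suc (card x)"
      using insert by (meson PowD card_insert_disjoint finite_subset subsetD)
    then show ?thesis by (simp add: sum.reindex[OF inj])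
  qed
  also have "(\<Sum>A\<in>Pow U. u ^ card A * v ^ (Suc (card U) - card A)) = (\<Sum>A\<in>Pow U. v * (u ^ card A * v ^ (card U - card A)))"
    apply (rule sum.cong, simp)
    using insert by (simp add: card_mono Suc_diff_le)
  also have "(\<Sum>A\<in>Pow U. u ^ Suc (card A) * v ^ (card U - card A)) = (\<Sum>A\<in>Pow U. u * (u ^ card A * v ^ (card U - card A)))"
    by (simp add: algebra_simps)
  finally show ?case using insert by (simp add: sum_distrib_left[symmetric] algebra_simps)
qed



lemma sum_Pow_split_prod:
  fixes f g :: "'a set \<Rightarrow> 'b::comm_ring_1"
  assumes "finite U" "finite V" "U \<inter> V = {}"
  shows "(\<Sum>A\<in>Pow (U \<union> V). f (A \<inter> U) * g (A \<inter> V)) = (\<Sum>A\<in>Pow U. f A) * (\<Sum>A\<in>Pow V. g A)"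
  using sum_Pow_split[OF assms, of "\<lambda>A1 A2. f A1 * g A2"] by (simp add: sum_product)

lemma T_part:
  fixes X Y :: "'b::comm_ring_1"
  assumes fin: "finite P" "finite Q" and disj: "P \<inter> Q = {}" and kP: "card P = k" and pQ: "card Q = p"
  shows "X * Y * (\<Sum>S1\<in>Pow P. \<Sum>S2\<in>Pow Q.
      X ^ (k - min (card S1 + (if S2 = {} then 0 else 1)) k) * Y ^ (card S1 + card S2 - min (card S1 + (if S2 = {} then 0 else 1)) k))
    = X * Y * (X + 1) ^ k + ((X + 1) ^ k - 1) * ((Y + 1) ^ p - 1) + X * Y * ((Y + 1) ^ p - 1)"
proof -
  define \<alpha> where "\<alpha> S1 = X ^ (k - card S1)" for S1 :: "'a set"
  define \<beta> where "\<beta> S2 = Y ^ card S2" for S2 :: "'a set"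
  define d1 where "d1 S1 = (if S1 = P then 1 else (0::'b))" for S1
  define d2 where "d2 S2 = (if S2 = {} then 1 else (0::'b))" for S2 :: "'a set"
  have pt: "X * Y * (X ^ (k - min (card S1 + (if S2 = {} then 0 else 1)) k) * Y ^ (card S1 + card S2 - min (card S1 + (if S2 = {} then 0 else 1)) k))
     = X * Y * \<alpha> S1 * d2 S2 + (\<alpha> S1 - d1 S1) * (\<beta> S2 - d2 S2) + X * Y * (\<beta> S2 - d2 S2) * d1 S1"
    if S1: "S1 \<subseteq> P" and S2: "S2 \<subseteq> Q" for S1 S2
  proof -
    have sk: "card S1 \<le> k" using S1 fin kP card_mono by blast
    show ?thesis
    proof (cases "S2 = {}")
      case True
      then show ?thesis using sk by (simp add: \<alpha>_def \<beta>_def d1_def d2_def)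
    next
      case False
      then have q1: "card S2 \<ge> 1" using S2 fin by (meson card_0_eq finite_subset less_one not_le)
      show ?thesis
      proof (cases "S1 = P")
        case True
        then have "card S1 = k" using kP by simp
        then show ?thesis using False True by (simp add: \<alpha>_def \<beta>_def d1_def d2_def)
      next
        case F2: False
        have "card S1 < k" using S1 F2 fin kP by (metis card_subset_eq le_neq_implies_less sk)
        then have e1: "k - min (card S1 + 1) k = k - card S1 - 1" and e2: "card S1 + card S2 - min (card S1 + 1) k = card S2 - 1"
          by auto
        have "X * Y * (X ^ (k - card S1 - 1) * Y ^ (card S2 - 1)) = (X * X ^ (k - card S1 - 1)) * (Y * Y ^ (card S2 - 1))"
          by (simp add: algebra_simps)
        also have "\<dots> = X ^ (k - card S1) * Y ^ card S2"
          using \<open>card S1 < k\<close> q1 by (simp add: power_Suc[symmetric] Suc_diff_Suc del: power_Suc)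
        finally show ?thesis using False F2 e1 e2 by (simp add: \<alpha>_def \<beta>_def d1_def d2_def)
      qed
    qed
  qed
  have sa: "(\<Sum>S1\<in>Pow P. \<alpha> S1) = (X + 1) ^ k"
    using sum_Pow_binom[OF fin(1), of 1 X] kP by (simp add: \<alpha>_def add.commute)
  have sb: "(\<Sum>S2\<in>Pow Q. \<beta> S2) = (Y + 1) ^ p"
    using sum_Pow_binom[OF fin(2), of Y 1] pQ by (simp add: \<beta>_def)
  have sd1: "(\<Sum>S1\<in>Pow P. d1 S1) = 1" unfolding d1_def using fin by (simp add: sum.delta)
  have sd2: "(\<Sum>S2\<in>Pow Q. d2 S2) = 1" unfolding d2_def using fin by (simp add: sum.delta)
  have "X * Y * (\<Sum>S1\<in>Pow P. \<Sum>S2\<in>Pow Q.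
      X ^ (k - min (card S1 + (if S2 = {} then 0 else 1)) k) * Y ^ (card S1 + card S2 - min (card S1 + (if S2 = {} then 0 else 1)) k))
    = (\<Sum>S1\<in>Pow P. \<Sum>S2\<in>Pow Q. X * Y * \<alpha> S1 * d2 S2 + (\<alpha> S1 - d1 S1) * (\<beta> S2 - d2 S2) + X * Y * (\<beta> S2 - d2 S2) * d1 S1)"
    unfolding sum_distrib_left by (intro sum.cong refl) (use pt in auto)
  also have "\<dots> = X * Y * (\<Sum>S1\<in>Pow P. \<alpha> S1) * (\<Sum>S2\<in>Pow Q. d2 S2)
      + (\<Sum>S1\<in>Pow P. \<alpha> S1 - d1 S1) * (\<Sum>S2\<in>Pow Q. \<beta> S2 - d2 S2)
      + X * Y * (\<Sum>S2\<in>Pow Q. \<beta> S2 - d2 S2) * (\<Sum>S1\<in>Pow P. d1 S1)"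
  proof -
    have t1: "(\<Sum>S1\<in>Pow P. \<Sum>S2\<in>Pow Q. X * Y * \<alpha> S1 * d2 S2) = X * Y * (\<Sum>S1\<in>Pow P. \<alpha> S1) * (\<Sum>S2\<in>Pow Q. d2 S2)"
      by (simp only: sum_product[of "\<lambda>S1. X * Y * \<alpha> S1"] sum_distrib_left[symmetric] sum_distrib_right[symmetric])
    have t2: "(\<Sum>S1\<in>Pow P. \<Sum>S2\<in>Pow Q. (\<alpha> S1 - d1 S1) * (\<beta> S2 - d2 S2)) = (\<Sum>S1\<in>Pow P. \<alpha> S1 - d1 S1) * (\<Sum>S2\<in>Pow Q. \<beta> S2 - d2 S2)"
      by (simp add: sum_product)
    have t3: "(\<Sum>S1\<in>Pow P. \<Sum>S2\<in>Pow Q. X * Y * (\<beta> S2 - d2 S2) * d1 S1) = X * Y * (\<Sum>S2\<in>Pow Q. \<beta> S2 - d2 S2) * (\<Sum>S1\<in>Pow P. d1 S1)"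
    proof -
      have "(\<Sum>S1\<in>Pow P. \<Sum>S2\<in>Pow Q. X * Y * (\<beta> S2 - d2 S2) * d1 S1) = (\<Sum>S1\<in>Pow P. (\<Sum>S2\<in>Pow Q. X * Y * (\<beta> S2 - d2 S2)) * d1 S1)"
        by (simp only: sum_distrib_right)
      also have "\<dots> = (\<Sum>S2\<in>Pow Q. X * Y * (\<beta> S2 - d2 S2)) * (\<Sum>S1\<in>Pow P. d1 S1)"
        by (simp only: sum_distrib_left)
      also have "\<dots> = X * Y * (\<Sum>S2\<in>Pow Q. \<beta> S2 - d2 S2) * (\<Sum>S1\<in>Pow P. d1 S1)"
        by (simp only: sum_distrib_left)
      finally show ?thesis .
    qed
    show ?thesis by (simp only: sum.distrib t1 t2 t3)
  qed
  also have "\<dots> = X * Y * (X + 1) ^ k + ((X + 1) ^ k - 1) * ((Y + 1) ^ p - 1) + X * Y * ((Y + 1) ^ p - 1)"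
    by (simp add: sum_subtractf sa sb sd1 sd2)
  finally show ?thesis .
qed


lemma tutte_abstract:
  fixes X Y :: "'b::comm_ring_1" and Lp P Q C :: "'a set"
  assumes fin: "finite Lp" "finite P" "finite Q" "finite C"
    and disj: "Lp \<inter> P = {}" "Lp \<inter> Q = {}" "Lp \<inter> C = {}" "P \<inter> Q = {}" "P \<inter> C = {}" "Q \<inter> C = {}"
    and cards: "card Lp = m" "card P = k" "card Q = p" "card C = l"
    and M: "M = (Lp \<union> P \<union> Q \<union> C, (\<lambda>B. B \<union> C) ` {B. B \<subseteq> P \<union> Q \<and> card B = k \<and> k \<le> card (B \<inter> P) + 1})"
  shows "X * Y * (\<Sum>A\<in>Pow (ground M). X ^ (mrank M (ground M) - mrank M A) * Y ^ (card A - mrank M A))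
    = (X + 1) ^ l * (Y + 1) ^ m * (X * Y * ((X + 1) ^ k + (Y + 1) ^ p - 1) + ((X + 1) ^ k - 1) * ((Y + 1) ^ p - 1))"
proof -
  define rT where "rT S1 S2 = min (card S1 + (if S2 = {} then 0 else 1)) k" for S1 S2 :: "'a set"
  define hT where "hT S1 S2 = X ^ (k - rT S1 S2) * Y ^ (card S1 + card S2 - rT S1 S2)" for S1 S2
  let ?G = "Lp \<union> P \<union> Q \<union> C"
  have rk: "mrank M A = card (A \<inter> C) + rT (A \<inter> P) (A \<inter> Q)" for A
    unfolding mrank_def M bases_def snd_conv rT_def
    by (rule rank_abstract) (use fin disj cards in auto)
  have gM: "ground M = ?G" unfolding M ground_def by simp
  have "?G \<inter> C = C" "?G \<inter> P = P" "?G \<inter> Q = Q" by auto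
  then have rkG: "mrank M (ground M) = l + k" unfolding gM rk rT_def using cards fin by simp
  let ?V = "C \<union> (P \<union> Q)"
  define g where "g A' = X ^ (l - card (A' \<inter> C)) * hT (A' \<inter> (P \<union> Q) \<inter> P) (A' \<inter> (P \<union> Q) \<inter> Q)" for A'
  have VC: "?V \<inter> C = C" "?V \<inter> P = P" "?V \<inter> Q = Q" "(P \<union> Q) \<inter> P = P" "(P \<union> Q) \<inter> Q = Q" by auto
  have summand: "X ^ (mrank M (ground M) - mrank M A) * Y ^ (card A - mrank M A) = Y ^ card (A \<inter> Lp) * g (A \<inter> ?V)"
    if A: "A \<in> Pow ?G" for A
  proof -
    have finA: "finite A" using A fin by (meson PowD finite_Un finite_subset)
    have c1: "card ((A \<inter> Q) \<union> (A \<inter> C)) = card (A \<inter> Q) + card (A \<inter> C)"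
      by (rule card_Un_disjoint) (use finA disj in auto)
    have c2: "card ((A \<inter> P) \<union> ((A \<inter> Q) \<union> (A \<inter> C))) = card (A \<inter> P) + card ((A \<inter> Q) \<union> (A \<inter> C))"
      by (rule card_Un_disjoint) (use finA disj in auto)
    have c3: "card ((A \<inter> Lp) \<union> ((A \<inter> P) \<union> ((A \<inter> Q) \<union> (A \<inter> C)))) = card (A \<inter> Lp) + card ((A \<inter> P) \<union> ((A \<inter> Q) \<union> (A \<inter> C)))"
      by (rule card_Un_disjoint) (use finA disj in auto)
    have "A = (A \<inter> Lp) \<union> ((A \<inter> P) \<union> ((A \<inter> Q) \<union> (A \<inter> C)))" using A by auto
    then have cA: "card A = card (A \<inter> Lp) + (card (A \<inter> P) + (card (A \<inter> Q) + card (A \<inter> C)))"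
      using c1 c2 c3 by simp
    have cC: "card (A \<inter> C) \<le> l" using cards fin by (metis card_mono inf_le2)
    have rk1: "rT (A \<inter> P) (A \<inter> Q) \<le> k" unfolding rT_def by simp
    have rk2: "rT (A \<inter> P) (A \<inter> Q) \<le> card (A \<inter> P) + card (A \<inter> Q)"
    proof (cases "A \<inter> Q = {}")
      case True then show ?thesis by (simp add: rT_def)
    next
      case False
      then have "card (A \<inter> Q) \<ge> 1" using fin by (simp add: Suc_leI card_gt_0_iff)
      then show ?thesis using False by (simp add: rT_def min_def)
    qed
    have e1: "mrank M (ground M) - mrank M A = (l - card (A \<inter> C)) + (k - rT (A \<inter> P) (A \<inter> Q))"
      unfolding rkG unfolding rk[of A] using cC rk1 by simp
    have e2: "card A - mrank M A = card (A \<inter> Lp) + (card (A \<inter> P) + card (A \<inter> Q) - rT (A \<inter> P) (A \<inter> Q))"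
      unfolding rk cA using rk2 by simp
    have gA: "g (A \<inter> ?V) = X ^ (l - card (A \<inter> C)) * hT (A \<inter> P) (A \<inter> Q)"
      unfolding g_def by (simp add: Int_assoc VC)
    show ?thesis unfolding e1 e2 gA hT_def by (simp add: power_add algebra_simps)
  qed
  have GV: "?G = Lp \<union> ?V" by auto
  have "(\<Sum>A\<in>Pow (ground M). X ^ (mrank M (ground M) - mrank M A) * Y ^ (card A - mrank M A))
      = (\<Sum>A\<in>Pow (Lp \<union> ?V). Y ^ card (A \<inter> Lp) * g (A \<inter> ?V))"
  proof (rule sum.cong)
    show "Pow (ground M) = Pow (Lp \<union> ?V)" using gM GV by simp
  qed (use summand GV in auto)
  also have "\<dots> = (\<Sum>A\<in>Pow Lp. Y ^ card A) * (\<Sum>A\<in>Pow ?V. g A)"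
    by (rule sum_Pow_split_prod) (use fin disj in auto)
  also have "(\<Sum>A\<in>Pow ?V. g A) = (\<Sum>A\<in>Pow C. X ^ (l - card A)) * (\<Sum>A\<in>Pow (P \<union> Q). hT (A \<inter> P) (A \<inter> Q))"
    unfolding g_def by (rule sum_Pow_split_prod) (use fin disj in auto)
  also have "(\<Sum>A\<in>Pow (P \<union> Q). hT (A \<inter> P) (A \<inter> Q)) = (\<Sum>S1\<in>Pow P. \<Sum>S2\<in>Pow Q. hT S1 S2)"
    by (rule sum_Pow_split) (use fin disj in auto)
  also have "(\<Sum>A\<in>Pow Lp. Y ^ card A) = (Y + 1) ^ m"
    using sum_Pow_binom[OF fin(1), of Y 1] cards by simp
  also have "(\<Sum>A\<in>Pow C. X ^ (l - card A)) = (X + 1) ^ l"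
    using sum_Pow_binom[OF fin(4), of 1 X] cards by (simp add: add.commute)
  finally have S: "(\<Sum>A\<in>Pow (ground M). X ^ (mrank M (ground M) - mrank M A) * Y ^ (card A - mrank M A))
      = (Y + 1) ^ m * ((X + 1) ^ l * (\<Sum>S1\<in>Pow P. \<Sum>S2\<in>Pow Q. hT S1 S2))" .
  have T: "X * Y * (\<Sum>S1\<in>Pow P. \<Sum>S2\<in>Pow Q. hT S1 S2) = X * Y * (X + 1) ^ k + ((X + 1) ^ k - 1) * ((Y + 1) ^ p - 1) + X * Y * ((Y + 1) ^ p - 1)"
    unfolding hT_def rT_def by (rule T_part) (use fin disj cards in auto)
  have "X * Y * (\<Sum>A\<in>Pow (ground M). X ^ (mrank M (ground M) - mrank M A) * Y ^ (card A - mrank M A))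
     = (X + 1) ^ l * (Y + 1) ^ m * (X * Y * (\<Sum>S1\<in>Pow P. \<Sum>S2\<in>Pow Q. hT S1 S2))"
    unfolding S by (simp add: algebra_simps)
  also have "\<dots> = (X + 1) ^ l * (Y + 1) ^ m * (X * Y * ((X + 1) ^ k + (Y + 1) ^ p - 1) + ((X + 1) ^ k - 1) * ((Y + 1) ^ p - 1))"
    unfolding T by (simp add: algebra_simps)
  finally show ?thesis .
qed


lemma special_eq:
  assumes "k \<le> n" "l \<le> k" "m \<le> n - k"
  shows "special k n l m = ({0..<m} \<union> {m..<m+(k-l)} \<union> {m+(k-l)..<n-l} \<union> {n-l..<n},
     (\<lambda>B. B \<union> {n-l..<n}) ` {B. B \<subseteq> {m..<m+(k-l)} \<union> {m+(k-l)..<n-l} \<and> card B = k-l \<and> k-l \<le> card (B \<inter> {m..<m+(k-l)}) + 1})"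
proof -
  have "{0..<m} \<union> {m..<m+(k-l)} \<union> {m+(k-l)..<n-l} \<union> {n-l..<n} = {0..<n}" using assms by auto
  moreover have "{m..<m+(k-l)} \<union> {m+(k-l)..<n-l} = {m..<n-l}" using assms by auto
  moreover have "special k n l m = (ground (special k n l m), bases (special k n l m))"
    by (simp add: ground_def bases_def)
  ultimately show ?thesis using special_ground[OF assms] special_bases[OF assms] by simp
qed

lemma tutte_special:
  assumes "k \<le> n" "l \<le> k" "m \<le> n - k"
  shows "(varX - 1) * (varY - 1) * tutte (special k n l m) =
    varX ^ l * varY ^ m * ((varX - 1) * (varY - 1) * (varX ^ (k - l) + varY ^ (n - k - m) - 1) + (varX ^ (k - l) - 1) * (varY ^ (n - k - m) - 1))"
proof -
  have "(varX - 1) * (varY - 1) * tutte (special k n l m) =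
    (varX - 1 + 1) ^ l * (varY - 1 + 1) ^ m * ((varX - 1) * (varY - 1) * ((varX - 1 + 1) ^ (k - l) + (varY - 1 + 1) ^ (n - k - m) - 1) + ((varX - 1 + 1) ^ (k - l) - 1) * ((varY - 1 + 1) ^ (n - k - m) - 1))"
    unfolding tutte_def
  proof (rule tutte_abstract[OF _ _ _ _ _ _ _ _ _ _ _ _ _ _ special_eq[OF assms]])
    show "card {m+(k-l)..<n-l} = n - k - m" using assms by simp
  qed (use assms in auto)
  then show ?thesis by simp
qed


lemma special_boundary:
  assumes "k \<le> n" "l \<le> k" "m \<le> n - k" "l = k \<or> m = n - k"
  shows "special k n l m = ({0..<n}, {{n-k..<n}})"
proof -
  define S where "S = {B. B \<subseteq> {m..<n-l} \<and> card B = k-l \<and> k-l \<le> card (B \<inter> {m..<m+(k-l)}) + 1}"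
  define D where "D = (if l = k then {} else {m..<n-l})"
  have SD: "S = {D}"
  proof (cases "l = k")
    case True
    have h: "\<And>B. B \<subseteq> {m..<n-l} \<Longrightarrow> card B = 0 \<Longrightarrow> B = {}"
      by (metis card_0_eq finite_atLeastLessThan finite_subset)
    show ?thesis
    proof (rule set_eqI, rule iffI)
      fix B assume "B \<in> S" then show "B \<in> {D}" unfolding S_def D_def using True h by simp
    next
      fix B assume "B \<in> {D}" then show "B \<in> S" unfolding S_def D_def using True by simp
    qed
  next
    case False
    then have me: "m = n - k" using assms(4) by simp
    have e1: "m + (k - l) = n - l" using me assms by simp
    have cm: "card {m..<n-l} = k - l" using me assms by simp
    have h: "\<And>B. B \<subseteq> {m..<n-l} \<Longrightarrow> card B = k - l \<Longrightarrow> B = {m..<n-l}"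
      using card_subset_eq[OF finite_atLeastLessThan] cm by metis
    show ?thesis
    proof (rule set_eqI, rule iffI)
      fix B assume "B \<in> S" then show "B \<in> {D}" unfolding S_def D_def using False h by simp
    next
      fix B assume "B \<in> {D}" then show "B \<in> S" unfolding S_def D_def e1 using False cm by simp
    qed
  qed
  have DU: "D \<union> {n-l..<n} = {n-k..<n}"
    unfolding D_def using assms by auto
  have "special k n l m = (ground (special k n l m), bases (special k n l m))"
    by (simp add: ground_def bases_def)
  also have "\<dots> = ({0..<n}, {{n-k..<n}})"
    unfolding special_ground[OF assms(1-3)] special_bases[OF assms(1-3)] S_def[symmetric] SD DU[symmetric]
    by simp
  finally show ?thesis .
qed

definition loops :: "'a matroid \<Rightarrow> 'a set" where
  "loops M = {x \<in> ground M. \<forall>B\<in>bases M. x \<notin> B}"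
definition coloops :: "'a matroid \<Rightarrow> 'a set" where
  "coloops M = {x \<in> ground M. \<forall>B\<in>bases M. x \<in> B}"

lemma loops_abstract:
  fixes Lp P Q C :: "'a set"
  assumes fin: "finite Lp" "finite P" "finite Q" "finite C"
    and disj: "Lp \<inter> P = {}" "Lp \<inter> Q = {}" "Lp \<inter> C = {}" "P \<inter> Q = {}" "P \<inter> C = {}" "Q \<inter> C = {}"
    and kP: "card P = k" and k1: "k \<ge> 1" and Qne: "Q \<noteq> {}"
    and M: "M = (Lp \<union> P \<union> Q \<union> C, (\<lambda>B. B \<union> C) ` {B. B \<subseteq> P \<union> Q \<and> card B = k \<and> k \<le> card (B \<inter> P) + 1})"
  shows "loops M = Lp" "coloops M = C"
proof -
  define S where "S = {B. B \<subseteq> P \<union> Q \<and> card B = k \<and> k \<le> card (B \<inter> P) + 1}"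
  have bM: "bases M = (\<lambda>B. B \<union> C) ` S" and gM: "ground M = Lp \<union> P \<union> Q \<union> C"
    unfolding M bases_def ground_def S_def by simp_all
  have bases_form: "\<exists>B'. B = B' \<union> C \<and> B' \<subseteq> P \<union> Q" if "B \<in> bases M" for B
    using that unfolding bM S_def by blast
  have PS: "P \<union> C \<in> bases M"
  proof -
    have "P \<in> S" using kP unfolding S_def by simp
    then show ?thesis unfolding bM by (rule imageI)
  qed
  have swap: "insert q (P - {p}) \<union> C \<in> bases M" if p: "p \<in> P" and q: "q \<in> Q" for p q
  proof -
    have qP: "q \<notin> P" using q disj by auto
    have cP: "card (P - {p}) = k - 1" using p kP fin by simp
    have "card (insert q (P - {p})) = k" using cP qP fin k1 by (simp add: card_insert_if)
    moreover have "insert q (P - {p}) \<inter> P = P - {p}" using qP by auto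
    moreover have "insert q (P - {p}) \<subseteq> P \<union> Q" using p q by auto
    ultimately have "insert q (P - {p}) \<in> S" using cP unfolding S_def by simp
    then show ?thesis unfolding bM by (rule imageI)
  qed
  obtain p0 where p0: "p0 \<in> P" using k1 kP by (metis card.empty ex_in_conv not_one_le_zero)
  obtain q0 where q0: "q0 \<in> Q" using Qne by auto
  show "loops M = Lp"
  proof
    show "loops M \<subseteq> Lp"
    proof
      fix x assume x: "x \<in> loops M"
      then have xg: "x \<in> Lp \<union> P \<union> Q \<union> C" and nb: "\<And>B. B \<in> bases M \<Longrightarrow> x \<notin> B"
        unfolding loops_def gM by auto
      have "x \<notin> P \<union> C" using nb[OF PS] .
      moreover have "x \<notin> Q"
      proof
        assume "x \<in> Q"
        have "x \<notin> insert x (P - {p0}) \<union> C" using nb[OF swap[OF p0 \<open>x \<in> Q\<close>]] .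
        then show False by simp
      qed
      ultimately show "x \<in> Lp" using xg by blast
    qed
    show "Lp \<subseteq> loops M"
    proof
      fix x assume x: "x \<in> Lp"
      have "x \<notin> B" if B: "B \<in> bases M" for B
      proof -
        obtain B' where "B = B' \<union> C" "B' \<subseteq> P \<union> Q" using bases_form[OF B] by blast
        then show ?thesis using x disj by blast
      qed
      moreover have "x \<in> ground M" using x gM by simp
      ultimately show "x \<in> loops M" unfolding loops_def by blast
    qed
  qed
  show "coloops M = C"
  proof
    show "coloops M \<subseteq> C"
    proof
      fix x assume x: "x \<in> coloops M"
      then have nb: "\<And>B. B \<in> bases M \<Longrightarrow> x \<in> B"
        unfolding coloops_def by auto
      have "x \<in> P \<union> C" using nb[OF PS] .
      moreover have "x \<notin> P"
      proof
        assume xP: "x \<in> P"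
        have "x \<in> insert q0 (P - {x}) \<union> C" using nb[OF swap[OF xP q0]] .
        moreover have "x \<noteq> q0" using xP q0 disj by blast
        moreover have "x \<notin> C" using xP disj by blast
        ultimately show False by simp
      qed
      ultimately show "x \<in> C" by blast
    qed
    show "C \<subseteq> coloops M"
    proof
      fix x assume x: "x \<in> C"
      have "x \<in> B" if B: "B \<in> bases M" for B
      proof -
        obtain B' where "B = B' \<union> C" using bases_form[OF B] by blast
        then show ?thesis using x by blast
      qed
      moreover have "x \<in> ground M" using x gM by simp
      ultimately show "x \<in> coloops M" unfolding coloops_def by blast
    qed
  qed
qed

lemma loops_special:
  assumes "k \<le> n" "l < k" "m < n - k"
  shows "loops (special k n l m) = {0..<m}" "coloops (special k n l m) = {n-l..<n}"
proof -
  have eq: "special k n l m = ({0..<m} \<union> {m..<m+(k-l)} \<union> {m+(k-l)..<n-l} \<union> {n-l..<n},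
     (\<lambda>B. B \<union> {n-l..<n}) ` {B. B \<subseteq> {m..<m+(k-l)} \<union> {m+(k-l)..<n-l} \<and> card B = k-l \<and> k-l \<le> card (B \<inter> {m..<m+(k-l)}) + 1})"
    by (rule special_eq[OF assms(1) less_imp_le[OF assms(2)] less_imp_le[OF assms(3)]])
  have ne: "{m+(k-l)..<n-l} \<noteq> {}" using assms by simp
  have k1: "k - l \<ge> 1" using assms by simp
  have c: "card {m..<m+(k-l)} = k - l" by simp
  have d1: "{0..<m} \<inter> {m..<m+(k-l)} = {}" by auto
  have d2: "{0..<m} \<inter> {m+(k-l)..<n-l} = {}" by auto
  have d3: "{0..<m} \<inter> {n-l..<n} = {}" using assms by auto
  have d4: "{m..<m+(k-l)} \<inter> {m+(k-l)..<n-l} = {}" by auto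
  have d5: "{m..<m+(k-l)} \<inter> {n-l..<n} = {}" using assms by auto
  have d6: "{m+(k-l)..<n-l} \<inter> {n-l..<n} = {}" by auto
  note L = loops_abstract[OF finite_atLeastLessThan finite_atLeastLessThan finite_atLeastLessThan finite_atLeastLessThan
      d1 d2 d3 d4 d5 d6 c k1 ne eq]
  show "loops (special k n l m) = {0..<m}" by (rule L(1))
  show "coloops (special k n l m) = {n-l..<n}" by (rule L(2))
qed

lemma loops_M0:
  fixes k n :: nat
  assumes "k \<le> n"
  shows "loops ({0..<n}, {{n-k..<n}}) = {0..<n-k}" "coloops ({0..<n}, {{n-k..<n}}) = {n-k..<n}"
  using assms unfolding loops_def coloops_def ground_def bases_def by auto

lemma iso_inv:
  assumes "iso M N" "\<forall>B\<in>bases M. B \<subseteq> ground M"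
  shows "card (loops M) = card (loops N) \<and> card (coloops M) = card (coloops N)"
proof -
  obtain f where f: "bij_betw f (ground M) (ground N)" "bases N = (\<lambda>B. f ` B) ` bases M"
    using assms(1) unfolding iso_def by blast
  have inj: "inj_on f (ground M)" and im: "f ` ground M = ground N" using f(1) by (auto simp: bij_betw_def)
  have mem: "f x \<in> f ` B \<longleftrightarrow> x \<in> B" if "x \<in> ground M" "B \<in> bases M" for x B
    using inj_on_image_mem_iff[OF inj] assms(2) that by blast
  have "loops N = f ` loops M"
  proof
    show "loops N \<subseteq> f ` loops M"
    proof
      fix y assume y: "y \<in> loops N"
      then have yg: "y \<in> ground N" and nb: "\<forall>B'\<in>bases N. y \<notin> B'" by (auto simp: loops_def)
      from yg im obtain x where x: "x \<in> ground M" "y = f x" by blast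
      have "\<forall>B\<in>bases M. x \<notin> B" using nb mem x unfolding f(2) by blast
      then have "x \<in> loops M" using x unfolding loops_def by blast
      then show "y \<in> f ` loops M" using x by blast
    qed
    show "f ` loops M \<subseteq> loops N"
      unfolding loops_def f(2) using mem im by auto
  qed
  moreover have "coloops N = f ` coloops M"
  proof
    show "coloops N \<subseteq> f ` coloops M"
    proof
      fix y assume y: "y \<in> coloops N"
      then have yg: "y \<in> ground N" and nb: "\<forall>B'\<in>bases N. y \<in> B'" by (auto simp: coloops_def)
      from yg im obtain x where x: "x \<in> ground M" "y = f x" by blast
      have "\<forall>B\<in>bases M. x \<in> B" using nb mem x unfolding f(2) by blast
      then have "x \<in> coloops M" using x unfolding coloops_def by blast
      then show "y \<in> f ` coloops M" using x by blast
    qed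
    show "f ` coloops M \<subseteq> coloops N"
      unfolding coloops_def f(2) using mem im by auto
  qed
  moreover have "inj_on f (loops M)" "inj_on f (coloops M)"
    using inj by (auto simp: loops_def coloops_def intro: inj_on_subset)
  ultimately show ?thesis by (simp add: card_image)
qed

definition Fp :: "nat \<Rightarrow> nat \<Rightarrow> nat \<Rightarrow> nat \<Rightarrow> int poly poly" where
  "Fp k e l m = varX ^ l * varY ^ m * ((varX - 1) * (varY - 1) * (varX ^ (k - l) + varY ^ (e - m) - 1) + (varX ^ (k - l) - 1) * (varY ^ (e - m) - 1))"

lemma varY_pow: "varY ^ j = monom 1 j"
  unfolding varY_def by (simp add: monom_power[of 1 1, simplified, symmetric] monom_altdef)

lemma x_pow: "([:0, 1:] :: int poly) ^ j = monom 1 j"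
  by (simp add: monom_power[of 1 1, simplified, symmetric] monom_altdef)

lemma Fp_split: "Fp k e l m = monom 1 m * (varX ^ l * ((varX - 1) * (varY - 1) * (varX ^ (k - l) + varY ^ (e - m) - 1) + (varX ^ (k - l) - 1) * (varY ^ (e - m) - 1)))"
  unfolding Fp_def varY_pow by (simp add: ac_simps)

lemma coeff_Fp_gt: "m0 < m \<Longrightarrow> coeff (Fp k e l m) m0 = 0"
  unfolding Fp_split coeff_monom_mult by simp

lemma Fp_boundary:
  assumes "l \<le> k" "m \<le> e" "l = k \<or> m = e"
  shows "Fp k e l m = monom 1 e * (varX ^ k * (varX - 1) * (varY - 1))"
proof -
  have "Fp k e l m = varX ^ k * varY ^ e * (varX - 1) * (varY - 1)"
    using assms(3)
  proof
    assume "l = k"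
    have ye: "varY ^ e = varY ^ m * varY ^ (e - m)" using assms(2) by (simp add: power_add[symmetric])
    show ?thesis unfolding Fp_def ye using \<open>l = k\<close> by (simp add: algebra_simps)
  next
    assume "m = e"
    have xk: "varX ^ k = varX ^ l * varX ^ (k - l)" using assms(1) by (simp add: power_add[symmetric])
    show ?thesis unfolding Fp_def xk using \<open>m = e\<close> by (simp add: algebra_simps)
  qed
  then show ?thesis unfolding varY_pow by (simp add: ac_simps)
qed

lemma coeff_Fp_boundary: "l \<le> k \<Longrightarrow> m \<le> e \<Longrightarrow> l = k \<or> m = e \<Longrightarrow> m0 < e \<Longrightarrow> coeff (Fp k e l m) m0 = 0"
  by (simp add: Fp_boundary coeff_monom_mult)

lemma coeff_Fp_boundary_top:
  assumes "l \<le> k" "m \<le> e" "l = k \<or> m = e"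
  shows "coeff (coeff (Fp k e l m) e) k = 1"
proof -
  have "coeff (Fp k e l m) e = poly (varX ^ k * (varX - 1) * (varY - 1)) 0"
    unfolding Fp_boundary[OF assms] coeff_monom_mult poly_0_coeff_0 by simp
  also have "\<dots> = [:0, 1:] ^ k - [:0, 1:] ^ (k + 1)"
    by (simp add: varX_def varY_def algebra_simps)
  finally show ?thesis unfolding x_pow by (simp add: coeff_monom)
qed

lemma coeff_Fp_diag:
  assumes "l \<le> k" "m < e" "l0 < k"
  shows "coeff (coeff (Fp k e l m) m) (l0 + 1) = (if l = l0 then 1 else 0)"
proof -
  have "coeff (Fp k e l m) m = poly (varX ^ l * ((varX - 1) * (varY - 1) * (varX ^ (k - l) + varY ^ (e - m) - 1) + (varX ^ (k - l) - 1) * (varY ^ (e - m) - 1))) 0"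
    unfolding Fp_split coeff_monom_mult poly_0_coeff_0 by simp
  also have "\<dots> = [:0, 1:] ^ l * (([:0, 1:] - 1) * (- 1) * ([:0, 1:] ^ (k - l) - 1) + ([:0, 1:] ^ (k - l) - 1) * (- 1))"
    using assms by (simp add: varX_def varY_def zero_power)
  also have "\<dots> = [:0, 1:] ^ (l + 1) - [:0, 1:] ^ (l + 1 + (k - l))"
    by (simp add: algebra_simps power_add)
  also have "\<dots> = monom 1 (l + 1) - monom 1 (k + 1)"
    unfolding x_pow using assms by simp
  finally show ?thesis using assms by (simp add: coeff_monom)
qed

lemma coeff_of_int_mult: "coeff (coeff (of_int c * p) j) i = c * coeff (coeff (p :: int poly poly) j) i"
  by (simp add: of_int_poly)


theorem proposition4p12:
  fixes k n :: nat
  assumes "k \<le> n"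
  shows "card ((\<lambda>M. {N \<in> special_family k n. iso M N}) ` special_family k n) = k * (n - k) + 1
    \<and> (\<forall>R. R \<subseteq> special_family k n \<and> (\<forall>M\<in>special_family k n. \<exists>!N. N \<in> R \<and> iso M N) \<longrightarrow>
         (\<forall>c :: nat matroid \<Rightarrow> int. (\<Sum>N\<in>R. of_int (c N) * tutte N) = 0 \<longrightarrow> (\<forall>N\<in>R. c N = 0)))"
proof -
  define e where "e = n - k"
  define fam where "fam = special_family k n"
  define M0 where "M0 = (({0..<n}, {{n-k..<n}}) :: nat matroid)"
  have fam_eq: "fam = (\<lambda>(l, m). special k n l m) ` ({..k} \<times> {..e})"
    unfolding fam_def special_family_def e_def by auto
  have finfam: "finite fam" unfolding fam_eq by simp
  have "\<forall>N\<in>fam. \<exists>lm. fst lm \<le> k \<and> snd lm \<le> e \<and> N = special k n (fst lm) (snd lm)"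
    unfolding fam_def special_family_def e_def by auto
  then obtain g where g: "\<forall>N\<in>fam. fst (g N) \<le> k \<and> snd (g N) \<le> e \<and> N = special k n (fst (g N)) (snd (g N))"
    by metis
  define lf where "lf N = fst (g N)" for N
  define mf where "mf N = snd (g N)" for N
  have lm: "lf N \<le> k" "mf N \<le> e" "N = special k n (lf N) (mf N)" if "N \<in> fam" for N
    using g that unfolding lf_def mf_def by auto
  define gen where "gen N \<longleftrightarrow> lf N < k \<and> mf N < e" for N
  have bd: "N = M0" if "N \<in> fam" "\<not> gen N" for N
  proof -
    have "lf N = k \<or> mf N = n - k" using lm[OF that(1)] that(2) unfolding gen_def e_def by auto
    then show ?thesis using special_boundary[OF assms, of "lf N" "mf N"] lm[OF that(1)] unfolding M0_def e_def by simp
  qed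
  have inv_sp: "card (loops (special k n l m)) = m \<and> card (coloops (special k n l m)) = l" if "l < k" "m < e" for l m
  proof -
    have "l \<le> n" using that(1) assms by simp
    then show ?thesis using loops_special[OF assms that(1)] that(2) unfolding e_def by simp
  qed
  have inv_gen: "card (loops N) = mf N \<and> card (coloops N) = lf N" if "N \<in> fam" "gen N" for N
    using inv_sp[of "lf N" "mf N"] that lm[OF that(1)] unfolding gen_def by simp
  have inv_M0: "card (loops M0) = e \<and> card (coloops M0) = k"
    using loops_M0[OF assms] assms unfolding M0_def e_def by simp
  have eq_of_inv: "M = N" if "M \<in> fam" "N \<in> fam" "card (loops M) = card (loops N)" "card (coloops M) = card (coloops N)" for M N
  proof (cases "gen M")
    case True
    show ?thesis
    proof (cases "gen N")
      case True2: True
      then have "mf M = mf N" "lf M = lf N" using inv_gen that True by auto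
      then show ?thesis using lm that by metis
    next
      case False
      then have "card (loops N) = e" using bd that inv_M0 by simp
      moreover have "card (loops M) < e" using inv_gen that True unfolding gen_def by simp
      ultimately show ?thesis using that by simp
    qed
  next
    case False
    show ?thesis
    proof (cases "gen N")
      case True
      then have "card (loops M) = e" using bd that inv_M0 False by simp
      moreover have "card (loops N) < e" using inv_gen that True unfolding gen_def by simp
      ultimately show ?thesis using that by simp
    next
      case False2: False
      have "M = M0" using bd[OF that(1) False] .
      moreover have "N = M0" using bd[OF that(2) False2] .
      ultimately show ?thesis by simp
    qed
  qed
  have bsub: "\<forall>B\<in>bases N. B \<subseteq> ground N" if "N \<in> fam" for N
  proof -
    have e: "special k n (lf N) (mf N) = ({0..<mf N} \<union> {mf N..<mf N+(k-lf N)} \<union> {mf N+(k-lf N)..<n-lf N} \<union> {n-lf N..<n},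
     (\<lambda>B. B \<union> {n-lf N..<n}) ` {B. B \<subseteq> {mf N..<mf N+(k-lf N)} \<union> {mf N+(k-lf N)..<n-lf N} \<and> card B = k-lf N \<and> k-lf N \<le> card (B \<inter> {mf N..<mf N+(k-lf N)}) + 1})"
      by (rule special_eq) (use assms lm[OF that] e_def in auto)
    have Neq: "N = ({0..<mf N} \<union> {mf N..<mf N+(k-lf N)} \<union> {mf N+(k-lf N)..<n-lf N} \<union> {n-lf N..<n},
     (\<lambda>B. B \<union> {n-lf N..<n}) ` {B. B \<subseteq> {mf N..<mf N+(k-lf N)} \<union> {mf N+(k-lf N)..<n-lf N} \<and> card B = k-lf N \<and> k-lf N \<le> card (B \<inter> {mf N..<mf N+(k-lf N)}) + 1})"
      using trans[OF lm(3)[OF that] e] .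
    show ?thesis by (subst (1 2) Neq) (auto simp: bases_def ground_def)
  qed
  have iso_iff: "iso M N \<longleftrightarrow> M = N" if "M \<in> fam" "N \<in> fam" for M N
  proof
    assume "iso M N"
    then show "M = N" using iso_inv[OF _ bsub[OF that(1)]] eq_of_inv[OF that] by blast
  next
    assume "M = N"
    have "iso M M" unfolding iso_def by (intro exI[of _ id]) simp
    then show "iso M N" using \<open>M = N\<close> by simp
  qed
  define inv where "inv N = (card (loops N), card (coloops N))" for N :: "nat matroid"
  have inj_inv: "inj_on inv fam" unfolding inj_on_def inv_def using eq_of_inv by blast
  have inv_img: "inv ` fam = ({..<e} \<times> {..<k}) \<union> {(e, k)}"
  proof
    show "inv ` fam \<subseteq> ({..<e} \<times> {..<k}) \<union> {(e, k)}"
    proof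
      fix v assume "v \<in> inv ` fam"
      then obtain N where N: "N \<in> fam" "v = inv N" by blast
      show "v \<in> ({..<e} \<times> {..<k}) \<union> {(e, k)}"
      proof (cases "gen N")
        case True then show ?thesis using inv_gen[OF N(1)] N unfolding inv_def gen_def by simp
      next
        case False then show ?thesis using bd[OF N(1)] inv_M0 N unfolding inv_def by simp
      qed
    qed
    show "({..<e} \<times> {..<k}) \<union> {(e, k)} \<subseteq> inv ` fam"
    proof
      fix v assume v: "v \<in> ({..<e} \<times> {..<k}) \<union> {(e, k)}"
      show "v \<in> inv ` fam"
      proof (cases "v = (e, k)")
        case True
        have "special k n k 0 \<in> fam" unfolding fam_def special_family_def by auto
        moreover have "special k n k 0 = M0" unfolding M0_def using special_boundary[OF assms, of k 0] by simp
        ultimately show ?thesis using True inv_M0 unfolding inv_def by force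
      next
        case False
        then obtain a b where ab: "v = (a, b)" "a < e" "b < k" using v by auto
        have "special k n b a \<in> fam" unfolding fam_def special_family_def
          using ab e_def by (intro CollectI exI[of _ b] exI[of _ a]) simp
        moreover have "inv (special k n b a) = v" using inv_sp[OF ab(3,2)] ab unfolding inv_def by simp
        ultimately show ?thesis by force
      qed
    qed
  qed
  have card_fam: "card fam = k * (n - k) + 1"
  proof -
    have "card fam = card (inv ` fam)" using card_image[OF inj_inv] by simp
    also have "\<dots> = card ({..<e} \<times> {..<k}) + card {(e, k)}" unfolding inv_img
      by (rule card_Un_disjoint) auto
    also have "\<dots> = k * (n - k) + 1" unfolding e_def by (simp add: card_cartesian_product)
    finally show ?thesis .
  qed
  have classes: "(\<lambda>M. {N \<in> fam. iso M N}) ` fam = (\<lambda>M. {M}) ` fam"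
  proof (rule image_cong[OF refl])
    fix M assume M: "M \<in> fam"
    show "{N \<in> fam. iso M N} = {M}"
    proof (rule set_eqI)
      fix N show "N \<in> {N \<in> fam. iso M N} \<longleftrightarrow> N \<in> {M}" using iso_iff[of M N] M by auto
    qed
  qed
  have part1: "card ((\<lambda>M. {N \<in> special_family k n. iso M N}) ` special_family k n) = k * (n - k) + 1"
    unfolding fam_def[symmetric] classes using card_fam by (simp add: card_image inj_on_def)
  have part2: "(\<forall>N\<in>R. c N = 0)" if R: "R \<subseteq> fam" and sum0: "(\<Sum>N\<in>R. of_int (c N) * tutte N) = 0" for R and c :: "nat matroid \<Rightarrow> int"
  proof -
    have finR: "finite R" using R finfam finite_subset by blast
    have FpN: "(varX - 1) * (varY - 1) * tutte N = Fp k e (lf N) (mf N)" if "N \<in> fam" for N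
    proof -
      have "(varX - 1) * (varY - 1) * tutte N = (varX - 1) * (varY - 1) * tutte (special k n (lf N) (mf N))"
        using lm[OF that] by metis
      also have "\<dots> = Fp k e (lf N) (mf N)" unfolding Fp_def e_def
        by (rule tutte_special) (use assms lm[OF that] e_def in auto)
      finally show ?thesis .
    qed
    have S0: "(\<Sum>N\<in>R. of_int (c N) * Fp k e (lf N) (mf N)) = 0"
    proof -
      have "(\<Sum>N\<in>R. of_int (c N) * Fp k e (lf N) (mf N)) = (\<Sum>N\<in>R. (varX - 1) * (varY - 1) * (of_int (c N) * tutte N))"
      proof (rule sum.cong[OF refl])
        fix N assume "N \<in> R"
        then have Nf: "N \<in> fam" using R by auto
        have "(varX - 1) * (varY - 1) * (of_int (c N) * tutte N) = of_int (c N) * ((varX - 1) * (varY - 1) * tutte N)"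
          by (simp only: mult_ac)
        then show "of_int (c N) * Fp k e (lf N) (mf N) = (varX - 1) * (varY - 1) * (of_int (c N) * tutte N)"
          using FpN[OF Nf] by simp
      qed
      also have "\<dots> = (varX - 1) * (varY - 1) * (\<Sum>N\<in>R. of_int (c N) * tutte N)"
        by (simp add: sum_distrib_left)
      finally show ?thesis using sum0 by simp
    qed
    have key: "c N0 = 0" if N0: "N0 \<in> R"
      and terms: "\<And>N. N \<in> R \<Longrightarrow> c N * coeff (coeff (Fp k e (lf N) (mf N)) j) i = (if N = N0 then c N0 else 0)" for N0 j i
    proof -
      have "0 = coeff (coeff (\<Sum>N\<in>R. of_int (c N) * Fp k e (lf N) (mf N)) j) i" using S0 by simp
      also have "\<dots> = (\<Sum>N\<in>R. c N * coeff (coeff (Fp k e (lf N) (mf N)) j) i)"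
        by (simp add: coeff_sum coeff_of_int_mult)
      also have "\<dots> = (\<Sum>N\<in>R. (if N = N0 then c N0 else 0))" using terms by (intro sum.cong) auto
      also have "\<dots> = c N0" using N0 finR by simp
      finally show ?thesis by simp
    qed
    have genz: "\<forall>N\<in>R. gen N \<longrightarrow> c N = 0"
    proof (rule ccontr)
      assume "\<not> (\<forall>N\<in>R. gen N \<longrightarrow> c N = 0)"
      define S where "S = {N \<in> R. gen N \<and> c N \<noteq> 0}"
      have Sne: "S \<noteq> {}" using \<open>\<not> _\<close> unfolding S_def by auto
      have finS: "finite S" using finR unfolding S_def by simp
      define m0 where "m0 = Min (mf ` S)"
      have "m0 \<in> mf ` S" unfolding m0_def using finS Sne by simp
      then obtain N0 where N0S: "N0 \<in> S" and mN0: "mf N0 = m0" by auto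
      have minm: "m0 \<le> mf N" if "N \<in> S" for N unfolding m0_def using finS that by simp
      have N0: "N0 \<in> R" "gen N0" "c N0 \<noteq> 0" using N0S unfolding S_def by auto
      have N0f: "N0 \<in> fam" using N0 R by auto
      define l0 where "l0 = lf N0"
      have l0k: "l0 < k" and m0e: "m0 < e" using N0(2) mN0 unfolding gen_def l0_def by auto
      have "c N0 = 0"
      proof (rule key[OF N0(1), of m0 "l0 + 1"])
        fix N assume NR: "N \<in> R"
        have Nf: "N \<in> fam" using NR R by auto
        show "c N * coeff (coeff (Fp k e (lf N) (mf N)) m0) (l0 + 1) = (if N = N0 then c N0 else 0)"
        proof (cases "N = N0")
          case True
          then show ?thesis using coeff_Fp_diag[of "lf N0" k m0 e l0] lm[OF N0f] m0e l0k mN0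
            unfolding l0_def by simp
        next
          case False
          show ?thesis
          proof (cases "c N = 0")
            case True then show ?thesis using False by simp
          next
            case cN: False
            show ?thesis
            proof (cases "gen N")
              case True
              then have NS: "N \<in> S" using NR cN unfolding S_def by simp
              then have "m0 \<le> mf N" by (rule minm)
              show ?thesis
              proof (cases "m0 < mf N")
                case True then show ?thesis using coeff_Fp_gt[OF True] False by simp
              next
                case eqm: False
                then have mm: "mf N = m0" using \<open>m0 \<le> mf N\<close> by simp
                have "lf N \<noteq> l0"
                proof
                  assume "lf N = l0"
                  then have "N = N0" using lm[OF Nf] lm[OF N0f] mm mN0 unfolding l0_def by metis
                  then show False using False by simp
                qed
                then show ?thesis using coeff_Fp_diag[of "lf N" k m0 e l0] lm[OF Nf] m0e l0k mm False by simp
              qed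
            next
              case ng: False
              have "lf N = k \<or> mf N = e" using ng lm[OF Nf] unfolding gen_def by auto
              then show ?thesis using coeff_Fp_boundary[of "lf N" k "mf N" e m0] lm[OF Nf] m0e False by simp
            qed
          qed
        qed
      qed
      then show False using N0(3) by simp
    qed
    have bdz: "c N0 = 0" if N0R: "N0 \<in> R" and ng0: "\<not> gen N0" for N0
    proof (rule key[OF N0R, of e k])
      fix N assume NR: "N \<in> R"
      have Nf: "N \<in> fam" using NR R by auto
      have N0f: "N0 \<in> fam" using N0R R by auto
      show "c N * coeff (coeff (Fp k e (lf N) (mf N)) e) k = (if N = N0 then c N0 else 0)"
      proof (cases "gen N")
        case True
        then have "c N = 0" using genz NR by auto
        moreover have "N \<noteq> N0" using True ng0 by auto
        ultimately show ?thesis by simp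
      next
        case False
        then have "N = N0" using bd[OF Nf] bd[OF N0f ng0] by simp
        moreover have "lf N = k \<or> mf N = e" using False lm[OF Nf] unfolding gen_def by auto
        ultimately show ?thesis using coeff_Fp_boundary_top[of "lf N" k "mf N" e] lm[OF Nf] by simp
      qed
    qed
    show ?thesis using genz bdz by blast
  qed
  show ?thesis using part1 part2 unfolding fam_def by blast
qed

end
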